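(* Let $\mathcal{H}$ be a finite-dimensional complex Hilbert space and let $U,V$ be unitary operators on $\mathcal{H}$ satisfying $V^{-1}U^2V=U^3$. Then $UV^{-1}UV=V^{-1}UVU$. *)

theory Defs
  imports "HOL-Analysis.Analysis"
begin

text \<open>A finite-dimensional complex Hilbert space is modelled as C^n (index type 'n, standard
inner product); operators are n x n complex matrices.\<close>

definition cmat_adjoint :: "complex^'n^'m \<Rightarrow> complex^'m^'n" where
  "cmat_adjoint A = (\<chi> i j. cnj (A $ j $ i))"

definition unitary_mat :: "complex^'n^'n \<Rightarrow> bool" where
  "unitary_mat U \<longleftrightarrow> cmat_adjoint U ** U = mat 1 \<and> U ** cmat_adjoint U = mat 1"

end

theory Submission
  imports Defs "HOL-Computational_Algebra.Fundamental_Theorem_Algebra" "HOL-Computational_Algebra.Primes"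
begin

fun mpow :: "complex^'n^'n \<Rightarrow> nat \<Rightarrow> complex^'n^'n" where
  "mpow A 0 = mat 1"
| "mpow A (Suc k) = A ** mpow A k"

definition papp :: "complex^'n^'n \<Rightarrow> complex poly \<Rightarrow> complex^'n \<Rightarrow> complex^'n" where
  "papp A p x = (\<Sum>k<Suc (degree p). coeff p k *s (mpow A k *v x))"

lemma mv_sum: "(A::complex^'n^'n) *v sum f S = (\<Sum>i\<in>S. A *v f i)"
  by (induction S rule: infinite_finite_induct) (auto simp: matrix_vector_right_distrib)

lemma sum_smult_left: "(\<Sum>i\<in>S. c *s f i) = (c::complex) *s sum f S"
  by (simp add: vec_eq_iff sum_distrib_left)

lemma papp_bound:
  assumes "degree p < N"
  shows "papp A p x = (\<Sum>k<N. coeff p k *s (mpow A k *v x))"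
  unfolding papp_def
proof (rule sum.mono_neutral_left)
  show "\<forall>i\<in>{..<N} - {..<Suc (degree p)}. coeff p i *s (mpow A i *v x) = 0"
    by (auto simp: coeff_eq_0)
qed (use assms in auto)

lemma papp_add: "papp A (p + q) x = papp A p x + papp A q x"
proof -
  define N where "N = Suc (max (degree p) (degree q))"
  have "degree (p+q) < N" "degree p < N" "degree q < N"
    using degree_add_le_max[of p q] by (auto simp: N_def)
  then show ?thesis
    by (simp add: papp_bound[of _ N] vector_sadd_rdistrib sum.distrib)
qed

lemma papp_smult: "papp A (smult c p) x = c *s papp A p x"
proof -
  have "degree (smult c p) < Suc (degree p)" by simp
  then show ?thesis
    by (simp add: papp_bound[of _ "Suc (degree p)"] papp_def vector_smult_assoc sum_smult_left[symmetric])
qed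

lemma papp_zero[simp]: "papp A 0 x = 0"
  by (simp add: papp_def)

lemma papp_pCons: "papp A (pCons a p) x = a *s x + A *v papp A p x"
proof -
  define N where "N = Suc (degree p)"
  have d: "degree (pCons a p) < Suc N" "degree p < N"
    by (auto simp: N_def degree_pCons_le le_less_trans)
  have "papp A (pCons a p) x = (\<Sum>k<Suc N. coeff (pCons a p) k *s (mpow A k *v x))"
    by (rule papp_bound[OF d(1)])
  also have "\<dots> = a *s x + (\<Sum>k<N. coeff p k *s (mpow A (Suc k) *v x))"
    by (simp only: sum.lessThan_Suc_shift) simp
  also have "(\<Sum>k<N. coeff p k *s (mpow A (Suc k) *v x)) = A *v papp A p x"
    by (simp add: papp_bound[OF d(2)] mv_sum vector_scalar_commute matrix_vector_mul_assoc)
  finally show ?thesis .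
qed

lemma papp_const[simp]: "papp A [:c:] x = c *s x"
  by (simp add: papp_pCons)

lemma papp_one[simp]: "papp A 1 x = x"
  by (simp add: one_pCons papp_pCons)

lemma papp_diff: "papp A (p - q) x = papp A p x - papp A q x"
  using papp_add[of A "p - q" q x] by (simp add: algebra_simps)

lemma papp_linfac: "papp A ([:-r,1:] * q) x = A *v papp A q x - r *s papp A q x"
proof -
  have "[:-r,1:] * q = pCons 0 q - smult r q" by simp
  then show ?thesis
    by (simp add: papp_diff papp_smult papp_pCons)
qed

lemma papp_sum: "papp A (sum f S) x = (\<Sum>i\<in>S. papp A (f i) x)"
  by (induction S rule: infinite_finite_induct) (auto simp: papp_add)

lemma papp_monom: "papp A (monom c k) x = c *s (mpow A k *v x)"
proof (induction k)
  case 0 then show ?case by (simp add: monom_0)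
next
  case (Suc k) then show ?case
    by (simp add: monom_Suc papp_pCons vector_scalar_commute matrix_vector_mul_assoc)
qed

definition csub :: "complex^'n^'n \<Rightarrow> (complex^'n) set \<Rightarrow> bool" where
  "csub A F \<longleftrightarrow> 0 \<in> F \<and> (\<forall>x\<in>F. \<forall>y\<in>F. x + y \<in> F) \<and> (\<forall>c. \<forall>x\<in>F. c *s x \<in> F) \<and> (\<forall>x\<in>F. A *v x \<in> F)"

lemma csub_mpow: "csub A F \<Longrightarrow> x \<in> F \<Longrightarrow> mpow A k *v x \<in> F"
proof (induction k)
  case 0 then show ?case by simp
next
  case (Suc k)
  then have "A *v (mpow A k *v x) \<in> F" by (auto simp: csub_def)
  then show ?case by (simp add: matrix_vector_mul_assoc)
qed

lemma csub_sum: "csub A F \<Longrightarrow> (\<And>i. i \<in> S \<Longrightarrow> f i \<in> F) \<Longrightarrow> sum f S \<in> F"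
  by (induction S rule: infinite_finite_induct) (auto simp: csub_def)

lemma csub_papp: "csub A F \<Longrightarrow> x \<in> F \<Longrightarrow> papp A p x \<in> F"
  unfolding papp_def
proof (rule csub_sum)
  fix i assume "csub A F" "x \<in> F"
  then have "mpow A i *v x \<in> F" by (rule csub_mpow)
  then show "coeff p i *s (mpow A i *v x) \<in> F" using \<open>csub A F\<close> by (simp add: csub_def)
qed

lemma eig_prod:
  assumes "csub A F" "y \<in> F" "y \<noteq> 0" "papp A (\<Prod>r\<leftarrow>rs. [:-r,1:]) y = 0"
  shows "\<exists>r\<in>set rs. \<exists>z\<in>F. z \<noteq> 0 \<and> A *v z = r *s z"
  using assms(4)
proof (induction rs)
  case Nil
  then show ?case using assms(3) by simp
next
  case (Cons r rs)
  define w where "w = papp A (\<Prod>r\<leftarrow>rs. [:-r,1:]) y"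
  have wF: "w \<in> F" unfolding w_def using assms(1,2) by (rule csub_papp)
  have "papp A ([:-r,1:] * (\<Prod>r\<leftarrow>rs. [:-r,1:])) y = 0" using Cons.prems by simp
  then have "A *v w - r *s w = 0" unfolding papp_linfac w_def .
  then have e: "A *v w = r *s w" by simp
  show ?case
  proof (cases "w = 0")
    case True
    then show ?thesis using Cons.IH w_def by auto
  next
    case False
    then show ?thesis using e wF by auto
  qed
qed

lemma eig_poly:
  assumes "q \<noteq> 0" "csub A F" "y \<in> F" "y \<noteq> 0" "papp A q y = 0"
  shows "\<exists>r. poly q r = 0 \<and> (\<exists>z\<in>F. z \<noteq> 0 \<and> A *v z = r *s z)"
proof -
  obtain rs where rs: "mset rs = proots q" using ex_mset by blast
  have "(\<Prod>x\<in>#proots q. [:-x, 1:]) = (\<Prod>r\<leftarrow>rs. [:-r,1:])"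
    by (simp flip: rs prod_mset_prod_list)
  then have qe: "q = smult (lead_coeff q) (\<Prod>r\<leftarrow>rs. [:-r,1:])"
    using complex_poly_decompose_multiset[of q] by simp
  have "lead_coeff q *s papp A (\<Prod>r\<leftarrow>rs. [:-r,1:]) y = 0"
    using assms(5) by (subst (asm) qe) (simp add: papp_smult)
  then have "papp A (\<Prod>r\<leftarrow>rs. [:-r,1:]) y = 0" using assms(1) by simp
  from eig_prod[OF assms(2,3,4) this] obtain r z where
    r: "r \<in> set rs" and z: "z \<in> F" "z \<noteq> 0" "A *v z = r *s z" by blast
  have "r \<in># proots q" using r rs by (metis set_mset_mset)
  then have "poly q r = 0" using assms(1) by simp
  then show ?thesis using z by blast
qed

lemma eig_mpow: "A *v z = r *s z \<Longrightarrow> mpow A k *v z = r ^ k *s z"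
  by (induction k) (auto simp: matrix_vector_mul_assoc[symmetric] vector_scalar_commute vector_smult_assoc)

lemma sum_smult_right: "sum f S *s (z::complex^'n) = (\<Sum>i\<in>S. f i *s z)"
  by (simp add: vec_eq_iff sum_distrib_right)

lemma eig_papp: assumes h: "A *v z = r *s z" shows "papp A p z = poly p r *s z"
  by (simp add: papp_def eig_mpow[OF h] vector_smult_assoc poly_altdef lessThan_Suc_atMost sum_smult_right)

lemma mv_sum_left: "(sum f S) *v (x::complex^'n) = (\<Sum>i\<in>S. f i *v x)"
  by (induction S rule: infinite_finite_induct) (auto simp: matrix_vector_mult_add_rdistrib)

lemma mv_scaleR_left: "((c::real) *\<^sub>R (M::complex^'n^'m)) *v x = (of_real c) *s (M *v x)"
  by (simp add: vec_eq_iff matrix_vector_mult_def sum_distrib_left) (simp add: scaleR_conv_of_real mult.assoc)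

lemma annih: fixes A :: "complex^'n^'n" shows "\<exists>p::complex poly. p \<noteq> 0 \<and> (\<forall>x. papp A p x = 0)"
proof -
  define D where "D = DIM(complex^'n^'n)"
  show ?thesis
  proof (cases "inj_on (mpow A) {..D}")
    case False
    then obtain i j where ij: "i \<noteq> j" "mpow A i = mpow A j" unfolding inj_on_def by auto
    define p where "p = monom 1 i - monom (1::complex) j"
    have "coeff p i = 1" using ij by (simp add: p_def coeff_monom)
    then have "p \<noteq> 0" by auto
    moreover have "papp A p x = 0" for x by (simp add: p_def papp_diff papp_monom ij(2))
    ultimately show ?thesis by blast
  next
    case True
    let ?P = "mpow A ` {..D}"
    have "card ?P = Suc D" using True by (simp add: card_image)
    then have "dependent ?P" by (intro dependent_biggerset) (auto simp: D_def)
    then obtain c where c: "(\<Sum>v\<in>?P. c v *\<^sub>R v) = 0" and cv: "\<exists>v\<in>?P. c v \<noteq> 0"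
      using independent_explicit[of ?P] by auto
    define p where "p = (\<Sum>k\<le>D. monom (complex_of_real (c (mpow A k))) k)"
    have cp: "coeff p k = (if k \<le> D then of_real (c (mpow A k)) else 0)" for k
      by (simp add: p_def coeff_sum coeff_monom)
    from cv obtain k where "k \<le> D" "c (mpow A k) \<noteq> 0" by auto
    then have "coeff p k \<noteq> 0" by (simp add: cp)
    then have "p \<noteq> 0" by auto
    moreover have "papp A p x = 0" for x
    proof -
      have "papp A p x = (\<Sum>k\<le>D. of_real (c (mpow A k)) *s (mpow A k *v x))"
        by (simp add: p_def papp_sum papp_monom)
      also have "\<dots> = (\<Sum>k\<le>D. c (mpow A k) *\<^sub>R mpow A k) *v x"
        by (simp add: mv_sum_left mv_scaleR_left)
      also have "(\<Sum>k\<le>D. c (mpow A k) *\<^sub>R mpow A k) = (\<Sum>v\<in>?P. c v *\<^sub>R v)"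
        by (simp add: sum.reindex[OF True])
      finally show ?thesis using c by simp
    qed
    ultimately show ?thesis by blast
  qed
qed

lemma three_prime: "prime (3::nat)" by simp

lemma not3_pow2: "\<not> (3::nat) dvd 2^i"
proof
  assume "3 dvd (2::nat)^i"
  then have "(3::nat) dvd 2" using prime_dvd_power[OF three_prime] by blast
  then show False by simp
qed

lemma not3_diff: assumes "m > 0" shows "\<not> (3::nat) dvd 3^m - 2^m"
proof
  assume h: "(3::nat) dvd 3^m - 2^m"
  have "(2::nat)^m < 3^m" using assms by (simp add: power_strict_mono)
  have "(3::nat) dvd 3^m" using assms by (simp add: dvd_power)
  with h have "(3::nat) dvd 3^m - (3^m - 2^m)" by (rule dvd_diff_nat[rotated])
  also have "3^m - (3^m - 2^m) = (2::nat)^m" using \<open>(2::nat)^m < 3^m\<close> by simp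
  finally show False using not3_pow2 by blast
qed

lemma cycle1:
  fixes S :: "complex set"
  assumes fin: "finite S" and nz: "0 \<notin> S" and step: "\<forall>r\<in>S. \<exists>m\<in>S. m^3 = r^2" and r: "r \<in> S"
  shows "\<exists>N::nat>0. \<not> 3 dvd N \<and> r^N = 1"
proof -
  obtain h where h: "\<forall>r\<in>S. h r \<in> S \<and> (h r)^3 = r^2" using step by metis
  define s where "s k = (h ^^ k) r" for k
  have sS: "s k \<in> S" for k by (induction k) (auto simp: s_def r h)
  have sSuc: "s (Suc k) ^ 3 = s k ^ 2" for k using h sS[of k] by (simp add: s_def)
  have key: "s m ^ (2^k) = s (m+k) ^ (3^k)" for k m
  proof (induction k)
    case 0 then show ?case by simp
  next
    case (Suc k)
    have "s m ^ (2^Suc k) = (s m ^ (2^k))^2" by (simp add: power_mult[symmetric] mult.commute)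
    also have "\<dots> = (s (m+k) ^ 2) ^ (3^k)" by (simp add: Suc power_mult[symmetric] mult.commute)
    also have "\<dots> = (s (Suc (m+k)) ^ 3) ^ (3^k)" by (simp add: sSuc)
    also have "\<dots> = s (m + Suc k) ^ (3^Suc k)" by (simp add: power_mult[symmetric] mult.commute)
    finally show ?case .
  qed
  have "\<not> inj_on s {..card S}"
  proof
    assume "inj_on s {..card S}"
    then have "card (s ` {..card S}) = Suc (card S)" by (simp add: card_image)
    moreover have "card (s ` {..card S}) \<le> card S" using sS fin by (intro card_mono) auto
    ultimately show False by simp
  qed
  then obtain i j where ij: "i < j" "s i = s j"
    unfolding inj_on_def by (metis linorder_neqE_nat)
  define m where "m = j - i"
  have m: "m > 0" "j = i + m" using ij by (auto simp: m_def)
  have si0: "s i \<noteq> 0" using sS[of i] nz by metis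
  have "s i ^ (2^m) = s i ^ (3^m)" using key[of i m] ij m by simp
  moreover have lt: "(2::nat)^m < 3^m" using m by (simp add: power_strict_mono)
  moreover have e: "(3::nat)^m = 2^m + (3^m - 2^m)" using lt by simp
  have "s i ^ (3^m) = s i^(2^m) * s i^(3^m - 2^m)" by (metis e power_add)
  ultimately have "s i ^ (2^m) * 1 = s i ^ (2^m) * s i ^ (3^m - 2^m)"
    by simp
  then have q: "s i ^ (3^m - 2^m) = 1" using si0 by simp
  define N where "N = (2::nat)^i * (3^m - 2^m)"
  have "r ^ N = (r ^ (2^i)) ^ (3^m - 2^m)" by (simp add: N_def power_mult)
  also have "r ^ (2^i) = s i ^ (3^i)" using key[of 0 i] by (simp add: s_def)
  also have "(s i ^ (3^i)) ^ (3^m - 2^m) = (s i ^ (3^m - 2^m)) ^ (3^i)"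
    by (simp flip: power_mult add: mult.commute)
  finally have "r ^ N = 1" using q by simp
  moreover have "N > 0" using lt by (simp add: N_def)
  moreover have "\<not> 3 dvd N"
    using not3_pow2[of i] not3_diff[OF m(1)] prime_dvd_mult_iff[OF three_prime] by (simp add: N_def)
  ultimately show ?thesis by blast
qed

lemma cycle:
  fixes S :: "complex set"
  assumes fin: "finite S" and nz: "0 \<notin> S" and step: "\<forall>r\<in>S. \<exists>m\<in>S. m^3 = r^2"
  shows "\<exists>M::nat>0. \<not> 3 dvd M \<and> (\<forall>r\<in>S. r^M = 1)"
proof -
  obtain Nf where Nf: "\<forall>r\<in>S. Nf r > 0 \<and> \<not> 3 dvd Nf r \<and> r ^ Nf r = 1"
    using cycle1[OF fin nz step] by metis
  define M where "M = (\<Prod>r\<in>S. Nf r)"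
  have "M > 0" using Nf by (simp add: M_def prod_pos)
  moreover have "\<not> 3 dvd M" using Nf fin by (simp add: M_def prime_dvd_prod_iff[OF fin three_prime])
  moreover have "r^M = 1" if "r \<in> S" for r
  proof -
    have "M = Nf r * (\<Prod>x\<in>S - {r}. Nf x)" using that fin by (simp add: M_def prod.remove)
    then show ?thesis using Nf that by (simp add: power_mult)
  qed
  ultimately show ?thesis by blast
qed

lemma mv_scaleR: "(A::complex^'n^'m) *v ((c::real) *\<^sub>R x) = c *\<^sub>R (A *v x)"
  by (simp add: vec_eq_iff matrix_vector_mult_def scaleR_sum_right)

lemma inner_cmult: "inner ((c::complex) * a) b = inner a (cnj c * b)"
  by (simp add: inner_complex_def algebra_simps)

lemma inner_smult: "inner ((c::complex) *s y) (x::complex^'n) = inner y (cnj c *s x)"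
  by (simp add: inner_vec_def inner_cmult)

lemma inner_adj: "inner ((A::complex^'n^'n) *v y) x = inner y (cmat_adjoint A *v x)"
proof -
  have "inner (A *v y) x = (\<Sum>i\<in>UNIV. \<Sum>j\<in>UNIV. inner (A$i$j * y$j) (x$i))"
    by (simp add: inner_vec_def matrix_vector_mult_def inner_sum_left)
  also have "\<dots> = (\<Sum>j\<in>UNIV. \<Sum>i\<in>UNIV. inner (y$j) (cnj (A$i$j) * x$i))"
    by (subst sum.swap) (simp add: inner_cmult)
  also have "\<dots> = inner y (cmat_adjoint A *v x)"
    by (simp add: inner_vec_def matrix_vector_mult_def inner_sum_right cmat_adjoint_def)
  finally show ?thesis .
qed

lemma mpow_add: "mpow A (a + b) = mpow A a ** mpow A b"
  by (induction a) (auto simp: matrix_mul_assoc)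

lemma mpow_mult: "mpow A (a * b) = mpow (mpow A a) b"
  by (induction b) (simp_all add: mpow_add)

lemma mpow_comm: "A ** B = B ** A \<Longrightarrow> mpow A k ** B = B ** mpow A k"
proof (induction k)
  case 0 then show ?case by simp
next
  case (Suc k)
  assume ab: "A ** B = B ** A"
  have "mpow A (Suc k) ** B = A ** (mpow A k ** B)" by (simp add: matrix_mul_assoc)
  also have "\<dots> = (A ** B) ** mpow A k" using Suc ab by (simp add: matrix_mul_assoc)
  also have "\<dots> = B ** mpow A (Suc k)" using ab by (simp add: matrix_mul_assoc)
  finally show ?case .
qed

lemma unitary_pow_one:
  fixes U :: "complex^'n^'n"
  assumes u: "unitary_mat U" and M: "M > 0"
    and ev: "\<And>r z. z \<noteq> 0 \<Longrightarrow> U *v z = r *s z \<Longrightarrow> r^M = 1"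
  shows "mpow U M = mat 1"
proof (rule ccontr)
  assume ne: "mpow U M \<noteq> mat 1"
  define E where "E = {x. mpow U M *v x = x}"
  define F where "F = {y. \<forall>x\<in>E. inner y x = 0}"
  have "\<exists>x. mpow U M *v x \<noteq> x" using ne by (simp add: matrix_eq)
  then have EU: "E \<noteq> UNIV" by (auto simp: E_def)
  have sE: "subspace E"
    by (auto simp: subspace_def E_def matrix_vector_right_distrib mv_scaleR)
  have "span E = E" using sE by (simp add: span_eq_iff)
  then have "dim E \<noteq> DIM(complex^'n)" using EU by (metis dim_eq_full)
  then have dE: "dim E < DIM(complex^'n)" using dim_subset_UNIV[of E] by simp
  obtain y where y: "y \<noteq> 0" "\<And>x. x \<in> span E \<Longrightarrow> orthogonal y x"
    using orthogonal_to_subspace_exists[OF dE] by blast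
  have yF: "y \<in> F" using y(2) span_base by (auto simp: F_def orthogonal_def)
  have adj: "cmat_adjoint U ** U = mat 1" "U ** cmat_adjoint U = mat 1"
    using u by (auto simp: unitary_mat_def)
  have adjE: "cmat_adjoint U *v x \<in> E" if "x \<in> E" for x
  proof -
    have c: "mpow U M ** cmat_adjoint U = cmat_adjoint U ** mpow U M"
      by (rule mpow_comm) (simp add: adj)
    have "mpow U M *v (cmat_adjoint U *v x) = cmat_adjoint U *v (mpow U M *v x)"
      by (simp add: matrix_vector_mul_assoc c)
    then show ?thesis using that by (simp add: E_def)
  qed
  have cs: "csub U F"
    unfolding csub_def
  proof (intro conjI ballI allI)
    show "0 \<in> F" by (simp add: F_def)
  next
    fix a b assume "a \<in> F" "b \<in> F" then show "a + b \<in> F" by (simp add: F_def inner_add_left)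
  next
    fix c a assume a: "a \<in> F"
    have "cnj c *s x \<in> E" if "x \<in> E" for x using that by (simp add: E_def vector_scalar_commute)
    then show "c *s a \<in> F" using a by (simp add: F_def inner_smult)
  next
    fix a assume a: "a \<in> F" then show "U *v a \<in> F" using adjE by (simp add: F_def inner_adj)
  qed
  obtain p where p: "p \<noteq> 0" "\<And>x. papp U p x = 0" using annih by blast
  obtain r z where z: "z \<in> F" "z \<noteq> 0" "U *v z = r *s z"
    using eig_poly[OF p(1) cs yF y(1) p(2)] by blast
  have "r^M = 1" using ev z by blast
  then have "z \<in> E" using eig_mpow[OF z(3), of M] by (simp add: E_def)
  then have "inner z z = 0" using z(1) by (simp add: F_def)
  then show False using z(2) by simp
qed

lemma inv3: "\<not> 3 dvd (M::nat) \<Longrightarrow> \<exists>e k. 3 * e = k * M + 1"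
proof -
  assume "\<not> 3 dvd M"
  then have "M mod 3 = 1 \<or> M mod 3 = 2" by presburger
  then have "M = 3*(M div 3)+1 \<or> M = 3*(M div 3)+2" by presburger
  then obtain t where "M = 3*t+1 \<or> M = 3*t+2" by blast
  then show ?thesis
  proof
    assume "M = 3*t+1" then have "3 * (2*t+1) = 2 * M + 1" by simp
    then show ?thesis by blast
  next
    assume "M = 3*t+2" then have "3 * (t+1) = 1 * M + 1" by simp
    then show ?thesis by blast
  qed
qed

theorem theorem1:
  fixes U V :: "complex^'n^'n"
  assumes "unitary_mat U" and "unitary_mat V"
    and "matrix_inv V ** (U ** U) ** V = U ** U ** U"
  shows "U ** matrix_inv V ** U ** V = matrix_inv V ** U ** V ** U"
proof -
  define Vi where "Vi = matrix_inv V"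
  have H: "Vi ** (U ** U) ** V = U ** U ** U" using assms(3) by (simp add: Vi_def)
  have "invertible V" using assms(2) unfolding invertible_def unitary_mat_def by blast
  then have "V ** Vi = mat 1 \<and> Vi ** V = mat 1"
    unfolding Vi_def matrix_inv_def invertible_def by (rule someI_ex)
  then have VV: "V ** Vi = mat 1" "Vi ** V = mat 1" by auto
  have adj: "cmat_adjoint U ** U = mat 1" "U ** cmat_adjoint U = mat 1"
    using assms(1) by (auto simp: unitary_mat_def)
  define S where "S = {r. \<exists>z. z \<noteq> 0 \<and> U *v z = r *s z}"
  obtain p where p: "p \<noteq> 0" "\<And>x. papp U p x = 0" using annih by blast
  have "S \<subseteq> {r. poly p r = 0}"
  proof
    fix r assume "r \<in> S"
    then obtain z where z: "z \<noteq> 0" "U *v z = r *s z" by (auto simp: S_def)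
    have "poly p r *s z = 0" using eig_papp[OF z(2), of p] p(2) by simp
    then show "r \<in> {r. poly p r = 0}" using z(1) by simp
  qed
  then have finS: "finite S" using poly_roots_finite[OF p(1)] finite_subset by blast
  have nz: "0 \<notin> S"
  proof
    assume "0 \<in> S"
    then obtain z where z: "z \<noteq> 0" "U *v z = 0" by (auto simp: S_def)
    have "z = (cmat_adjoint U ** U) *v z" using adj by simp
    also have "\<dots> = 0" by (simp add: matrix_vector_mul_assoc[symmetric] z(2))
    finally show False using z(1) by simp
  qed
  have step: "\<forall>r\<in>S. \<exists>m\<in>S. m^3 = r^2"
  proof
    fix r assume "r \<in> S"
    then obtain z where z: "z \<noteq> 0" "U *v z = r *s z" by (auto simp: S_def)
    define w where "w = Vi *v z"
    have "V *v w = z" using VV by (simp add: w_def matrix_vector_mul_assoc)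
    then have w0: "w \<noteq> 0" using z(1) by auto
    have "U *v (U *v (U *v w)) = (U ** U ** U) *v w" by (simp add: matrix_vector_mul_assoc matrix_mul_assoc)
    also have "\<dots> = (Vi ** (U ** U) ** V) *v w" by (simp add: H)
    also have "\<dots> = Vi *v (U *v (U *v (V *v w)))" by (simp add: matrix_vector_mul_assoc matrix_mul_assoc)
    also have "\<dots> = r^2 *s w" using \<open>V *v w = z\<close> z(2)
      by (simp add: vector_scalar_commute vector_smult_assoc w_def power2_eq_square)
    finally have e3: "U *v (U *v (U *v w)) = r^2 *s w" .
    define q where "q = [:-(r^2), 0, 0, 1:]"
    have q0: "q \<noteq> 0" by (simp add: q_def)
    have "papp U q w = 0" using e3 by (simp add: q_def papp_pCons)
    moreover have "csub U UNIV" by (simp add: csub_def)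
    ultimately obtain m z' where "poly q m = 0" "z' \<noteq> 0" "U *v z' = m *s z'"
      using eig_poly[OF q0 _ _ w0] by blast
    then have "m \<in> S" "m^3 = r^2"
      by (auto simp: S_def q_def algebra_simps power3_eq_cube power2_eq_square)
    then show "\<exists>m\<in>S. m^3 = r^2" by blast
  qed
  obtain M where M: "M > 0" "\<not> 3 dvd M" "\<forall>r\<in>S. r^M = 1" using cycle[OF finS nz step] by blast
  have UM: "mpow U M = mat 1"
    by (rule unitary_pow_one[OF assms(1) M(1)]) (use M(3) in \<open>auto simp: S_def\<close>)
  obtain e k where ek: "3 * e = k * M + 1" using inv3[OF M(2)] by blast
  have "mpow U (k * M) = mat 1"
  proof -
    have "mpow U (k * M) = mpow (mpow U M) k" by (simp add: mpow_mult mult.commute)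
    also have "\<dots> = mat 1" unfolding UM by (induction k) simp_all
    finally show ?thesis .
  qed
  then have U3e: "mpow (U ** U ** U) e = U"
    using mpow_add[of U "k*M" 1] ek mpow_mult[of U 3 e]
    by (simp add: numeral_3_eq_3 matrix_mul_assoc)
  define W where "W = Vi ** U ** V"
  have WW: "W ** W = U ** U ** U"
  proof -
    have "W ** W = Vi ** U ** (V ** Vi) ** U ** V" by (simp add: W_def matrix_mul_assoc)
    also have "\<dots> = Vi ** (U ** U) ** V" by (simp add: VV matrix_mul_assoc)
    finally show ?thesis using H by simp
  qed
  have "W ** (U ** U ** U) = (U ** U ** U) ** W" unfolding WW[symmetric] by (simp add: matrix_mul_assoc)
  then have "mpow (U ** U ** U) e ** W = W ** mpow (U ** U ** U) e" by (intro mpow_comm) simp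
  then have "U ** W = W ** U" by (simp add: U3e)
  then show ?thesis by (simp add: W_def Vi_def matrix_mul_assoc)
qed

end
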